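(* Let $P$ be a finite graded poset of rank $n$ with $\hat0$ and $\hat1$ admitting an $S_n$ EL-labeling $\lambda$, and let $U_1,\dots,U_{n-1}:\mathcal{M}(P)\to\mathcal{M}(P)$ be the maps defined below. Then $U_i^2=U_i$ for all $i$, $U_iU_j=U_jU_i$ whenever $|i-j|\ge2$, and $U_iU_{i+1}U_i=U_{i+1}U_iU_{i+1}$ for $i=1,\dots,n-2$. Consequently, extending the $U_i$ linearly to $\mathbb{C}\mathcal{M}(P)$ and letting $T_i$ act as $-U_i$ gives a representation of the 0-Hecke algebra $\mathcal{H}_n(0)$ on $\mathbb{C}\mathcal{M}(P)$. Moreover, if $U_i(\mathfrak m)\ne\mathfrak m$ then the label permutation of $U_i(\mathfrak m)$ is $\omega_{\mathfrak m}s_i$, which has one fewer inversion than $\omega_{\mathfrak m}$.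
   Context: Definitions: for a finite graded poset $P$ of rank $n$ with $\hat0,\hat1$, $\mathcal{M}(P)$ is its set of maximal chains and $\mathcal{E}(P)$ its set of covering pairs. An edge-labeling $\lambda:\mathcal{E}(P)\to\mathbb{Z}$ is an EL-labeling if every interval $[s,t]$ has exactly one maximal chain whose labels (read bottom to top) are weakly increasing, and its label sequence is strictly lexicographically smaller than that of every other maximal chain of $[s,t]$. It is an $S_n$ EL-labeling if moreover for every maximal chain $\mathfrak m:\hat0=x_0<\cdots<x_n=\hat1$ the sequence $\omega_{\mathfrak m}=(\lambda(x_0,x_1),\dots,\lambda(x_{n-1},x_n))$ is a permutation of $[n]$. The descent set of $\mathfrak m$ is the descent set of $\omega_{\mathfrak m}$. For $i\in[n-1]$, $U_i(\mathfrak m)$ is the unique maximal chain of $P$ that agrees with $\mathfrak m$ except possibly at its element of rank $i$ and has no descent at $i$. $s_i$ is the adjacent transposition $(i\ i+1)$; permutations compose right to left. The 0-Hecke algebra $\mathcal{H}_n(0)$ is the $\mathbb{C}$-algebra generated by $T_1,\dots,T_{n-1}$ subject to $T_i^2=-T_i$, $T_iT_j=T_jT_i$ for $|i-j|\ge2$, and $T_iT_{i+1}T_i=T_{i+1}T_iT_{i+1}$. *)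

theory Defs
  imports Complex_Main "HOL-Combinatorics.Transposition"
begin

definition poset_on :: "'a set \<Rightarrow> ('a \<Rightarrow> 'a \<Rightarrow> bool) \<Rightarrow> bool" where
  "poset_on P le \<longleftrightarrow>
     (\<forall>x\<in>P. le x x) \<and>
     (\<forall>x\<in>P. \<forall>y\<in>P. le x y \<and> le y x \<longrightarrow> x = y) \<and>
     (\<forall>x\<in>P. \<forall>y\<in>P. \<forall>z\<in>P. le x y \<and> le y z \<longrightarrow> le x z)"

definition covers :: "'a set \<Rightarrow> ('a \<Rightarrow> 'a \<Rightarrow> bool) \<Rightarrow> 'a \<Rightarrow> 'a \<Rightarrow> bool" where
  "covers P le x y \<longleftrightarrow> x \<in> P \<and> y \<in> P \<and> le x y \<and> x \<noteq> y \<and>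
     \<not> (\<exists>z\<in>P. le x z \<and> le z y \<and> z \<noteq> x \<and> z \<noteq> y)"

definition maxchains :: "'a set \<Rightarrow> ('a \<Rightarrow> 'a \<Rightarrow> bool) \<Rightarrow> 'a \<Rightarrow> 'a \<Rightarrow> 'a list set" where
  "maxchains P le s t = {c. c \<noteq> [] \<and> hd c = s \<and> last c = t \<and>
     (\<forall>k. Suc k < length c \<longrightarrow> covers P le (c ! k) (c ! Suc k))}"

definition labels :: "('a \<Rightarrow> 'a \<Rightarrow> int) \<Rightarrow> 'a list \<Rightarrow> int list" where
  "labels lam c = map (\<lambda>k. lam (c ! k) (c ! Suc k)) [0..<length c - 1]"

definition bounded_graded_poset ::
  "'a set \<Rightarrow> ('a \<Rightarrow> 'a \<Rightarrow> bool) \<Rightarrow> 'a \<Rightarrow> 'a \<Rightarrow> nat \<Rightarrow> bool" where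
  "bounded_graded_poset P le zero one n \<longleftrightarrow>
     finite P \<and> poset_on P le \<and> zero \<in> P \<and> one \<in> P \<and>
     (\<forall>x\<in>P. le zero x \<and> le x one) \<and>
     (\<forall>c\<in>maxchains P le zero one. length c = Suc n)"

definition EL_labeling :: "'a set \<Rightarrow> ('a \<Rightarrow> 'a \<Rightarrow> bool) \<Rightarrow> ('a \<Rightarrow> 'a \<Rightarrow> int) \<Rightarrow> bool" where
  "EL_labeling P le lam \<longleftrightarrow>
     (\<forall>s\<in>P. \<forall>t\<in>P. le s t \<longrightarrow>
        (\<exists>!c. c \<in> maxchains P le s t \<and> sorted (labels lam c)) \<and>
        (\<forall>c\<in>maxchains P le s t. sorted (labels lam c) \<longrightarrow>
           (\<forall>c'\<in>maxchains P le s t. c' \<noteq> c \<longrightarrow>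
              (labels lam c, labels lam c') \<in> lexord {(a, b). a < b})))"

definition Sn_EL_labeling ::
  "'a set \<Rightarrow> ('a \<Rightarrow> 'a \<Rightarrow> bool) \<Rightarrow> 'a \<Rightarrow> 'a \<Rightarrow> nat \<Rightarrow> ('a \<Rightarrow> 'a \<Rightarrow> int) \<Rightarrow> bool" where
  "Sn_EL_labeling P le zero one n lam \<longleftrightarrow>
     EL_labeling P le lam \<and>
     (\<forall>c\<in>maxchains P le zero one.
        distinct (labels lam c) \<and> set (labels lam c) = {1..int n})"

definition omega :: "('a \<Rightarrow> 'a \<Rightarrow> int) \<Rightarrow> nat \<Rightarrow> 'a list \<Rightarrow> nat \<Rightarrow> nat" where
  "omega lam n c k = (if 1 \<le> k \<and> k \<le> n then nat (labels lam c ! (k - 1)) else k)"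

text \<open>Descent of a chain at position i (1-based): omega(i) > omega(i+1).\<close>
definition has_descent :: "('a \<Rightarrow> 'a \<Rightarrow> int) \<Rightarrow> 'a list \<Rightarrow> nat \<Rightarrow> bool" where
  "has_descent lam c i \<longleftrightarrow> labels lam c ! (i - 1) > labels lam c ! i"

definition U_op ::
  "'a set \<Rightarrow> ('a \<Rightarrow> 'a \<Rightarrow> bool) \<Rightarrow> 'a \<Rightarrow> 'a \<Rightarrow> ('a \<Rightarrow> 'a \<Rightarrow> int) \<Rightarrow> nat \<Rightarrow> 'a list \<Rightarrow> 'a list" where
  "U_op P le zero one lam i m = (THE m'. m' \<in> maxchains P le zero one \<and>
      length m' = length m \<and> (\<forall>j. j \<noteq> i \<longrightarrow> m' ! j = m ! j) \<and>
      \<not> has_descent lam m' i)"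

definition inversions :: "nat \<Rightarrow> (nat \<Rightarrow> nat) \<Rightarrow> nat" where
  "inversions n \<sigma> = card {(a, b). 1 \<le> a \<and> a < b \<and> b \<le> n \<and> \<sigma> a > \<sigma> b}"

text \<open>Linear extension of U_i to the vector space C M(P), whose elements are
  represented as complex-valued functions on chains vanishing outside M(P).\<close>
definition U_lin ::
  "'a set \<Rightarrow> ('a \<Rightarrow> 'a \<Rightarrow> bool) \<Rightarrow> 'a \<Rightarrow> 'a \<Rightarrow> ('a \<Rightarrow> 'a \<Rightarrow> int) \<Rightarrow> nat
    \<Rightarrow> ('a list \<Rightarrow> complex) \<Rightarrow> ('a list \<Rightarrow> complex)" where
  "U_lin P le zero one lam i v = (\<lambda>m'. if m' \<in> maxchains P le zero one then
      (\<Sum>m\<in>{m \<in> maxchains P le zero one. U_op P le zero one lam i m = m'}. v m) else 0)"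

definition T_act ::
  "'a set \<Rightarrow> ('a \<Rightarrow> 'a \<Rightarrow> bool) \<Rightarrow> 'a \<Rightarrow> 'a \<Rightarrow> ('a \<Rightarrow> 'a \<Rightarrow> int) \<Rightarrow> nat
    \<Rightarrow> ('a list \<Rightarrow> complex) \<Rightarrow> ('a list \<Rightarrow> complex)" where
  "T_act P le zero one lam i v = - U_lin P le zero one lam i v"

end

theory Submission imports Defs begin

lemma succ_nth: "successively R c \<longleftrightarrow> (\<forall>k. Suc k < length c \<longrightarrow> R (c!k) (c!Suc k))"
proof (induction c)
  case Nil then show ?case by simp
next
  case (Cons x xs)
  show ?case
  proof (cases xs)
    case Nil then show ?thesis by simp
  next
    case (Cons y ys)
    have "(\<forall>k. Suc k < length (x#xs) \<longrightarrow> R ((x#xs)!k) ((x#xs)!Suc k)) \<longleftrightarrow>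
          R x y \<and> (\<forall>k. Suc k < length xs \<longrightarrow> R (xs!k) (xs!Suc k))"
      using Cons by (auto simp: All_less_Suc2 less_Suc_eq_0_disj)
    then show ?thesis using Cons \<open>successively R xs = _\<close> by simp
  qed
qed

lemma maxchains_iff: "c \<in> maxchains P le s t \<longleftrightarrow> c \<noteq> [] \<and> hd c = s \<and> last c = t \<and> successively (covers P le) c"
  by (simp add: maxchains_def succ_nth)

lemma labels_len[simp]: "length (labels lam c) = length c - 1"
  by (simp add: labels_def)
lemma labels_nth: "k < length c - 1 \<Longrightarrow> labels lam c ! k = lam (c!k) (c!Suc k)"
  by (simp add: labels_def)


locale snel =
  fixes P :: "'a set" and le :: "'a \<Rightarrow> 'a \<Rightarrow> bool" and zero one :: 'a
    and n :: nat and lam :: "'a \<Rightarrow> 'a \<Rightarrow> int"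
  assumes graded: "bounded_graded_poset P le zero one n"
    and SnEL: "Sn_EL_labeling P le zero one n lam"
begin

abbreviation "MC \<equiv> maxchains P le zero one"
abbreviation "UU \<equiv> U_op P le zero one lam"

lemma finP: "finite P" and pos: "poset_on P le" and zP: "zero \<in> P" and oP: "one \<in> P"
  and lenM: "c \<in> MC \<Longrightarrow> length c = Suc n"
  using graded by (auto simp: bounded_graded_poset_def)

lemma EL: "EL_labeling P le lam" using SnEL by (simp add: Sn_EL_labeling_def)

lemma perm: "c \<in> MC \<Longrightarrow> distinct (labels lam c) \<and> set (labels lam c) = {1..int n}"
  using SnEL by (simp add: Sn_EL_labeling_def)

lemma M_nth:
  assumes "c \<in> MC"
  shows "c!0 = zero" "c!n = one" "\<And>k. k < n \<Longrightarrow> covers P le (c!k) (c!Suc k)"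
proof -
  have L: "length c = Suc n" using lenM assms .
  show "c!0 = zero" using assms by (auto simp: maxchains_def hd_conv_nth)
  show "c!n = one" using assms L by (auto simp: maxchains_def last_conv_nth)
  show "\<And>k. k < n \<Longrightarrow> covers P le (c!k) (c!Suc k)" using assms L by (auto simp: maxchains_def)
qed

lemma M_intro:
  assumes "length c = Suc n" "c!0 = zero" "c!n = one" "\<And>k. k < n \<Longrightarrow> covers P le (c!k) (c!Suc k)"
  shows "c \<in> MC"
proof -
  have "c \<noteq> []" using assms(1) by auto
  then show ?thesis using assms by (auto simp: maxchains_def hd_conv_nth last_conv_nth)
qed

lemma M_P: assumes "c \<in> MC" "k \<le> n" shows "c!k \<in> P"
proof (cases "k < n")
  case True then show ?thesis using M_nth(3)[OF assms(1) True] by (simp add: covers_def)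
next
  case False
  then have "k = n" using assms by simp
  then show ?thesis using M_nth(2)[OF assms(1)] oP by simp
qed

lemma chain_le: assumes "c \<in> MC" "a \<le> b" "b \<le> n" shows "le (c!a) (c!b)"
  using assms(2,3)
proof (induction b)
  case 0 then show ?case using pos M_P[OF assms(1)] by (simp add: poset_on_def)
next
  case (Suc b)
  show ?case
  proof (cases "a = Suc b")
    case True then show ?thesis using pos M_P[OF assms(1)] Suc by (simp add: poset_on_def)
  next
    case False
    then have "le (c!a) (c!b)" using Suc by simp
    moreover have "le (c!b) (c!Suc b)" using M_nth(3)[OF assms(1), of b] Suc by (simp add: covers_def)
    ultimately show ?thesis using pos M_P[OF assms(1)] Suc unfolding poset_on_def
      by (meson Suc_leD le_trans)
  qed
qed

lemma seg:
  assumes "c \<in> MC" "a \<le> b" "b \<le> n"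
  shows "take (Suc b - a) (drop a c) \<in> maxchains P le (c!a) (c!b)"
proof -
  have L: "length c = Suc n" using lenM assms(1) .
  let ?d = "take (Suc b - a) (drop a c)"
  have Ld: "length ?d = Suc b - a" using L assms by simp
  have nd: "\<And>k. k < Suc b - a \<Longrightarrow> ?d!k = c!(a+k)" using L assms by simp
  show ?thesis unfolding maxchains_def
  proof (intro CollectI conjI allI impI)
    show "?d \<noteq> []" using Ld assms by auto
    show "hd ?d = c!a" using nd[of 0] \<open>?d \<noteq> []\<close> assms by (simp add: hd_conv_nth)
    show "last ?d = c!b" using Ld nd[of "b - a"] assms by (simp add: last_conv_nth)
    fix k assume k: "Suc k < length ?d"
    then have ak: "a + k < n" using Ld assms by linarith
    have "?d!k = c!(a+k)" "?d!Suc k = c!Suc (a+k)" using k Ld nd[of k] nd[of "Suc k"] by auto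
    then show "covers P le (?d!k) (?d!Suc k)" using M_nth(3)[OF assms(1) ak]
      by simp
  qed
qed

lemma EL_unique:
  assumes "s \<in> P" "t \<in> P" "le s t" "c1 \<in> maxchains P le s t" "sorted (labels lam c1)"
    "c2 \<in> maxchains P le s t" "sorted (labels lam c2)"
  shows "c1 = c2"
  using EL assms unfolding EL_labeling_def by blast

lemma EL_ex:
  assumes "s \<in> P" "t \<in> P" "le s t"
  obtains c where "c \<in> maxchains P le s t" "sorted (labels lam c)"
  using EL assms unfolding EL_labeling_def by blast

lemma window:
  assumes m1: "m1 \<in> MC" and m2: "m2 \<in> MC" and ab: "a < b" "b \<le> n"
    and agree: "\<And>j. j \<le> n \<Longrightarrow> j \<le> a \<or> b \<le> j \<Longrightarrow> m1!j = m2!j"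
    and s1: "\<And>k. a \<le> k \<Longrightarrow> Suc k < b \<Longrightarrow> labels lam m1 ! k \<le> labels lam m1 ! Suc k"
    and s2: "\<And>k. a \<le> k \<Longrightarrow> Suc k < b \<Longrightarrow> labels lam m2 ! k \<le> labels lam m2 ! Suc k"
  shows "m1 = m2"
proof -
  have L1: "length m1 = Suc n" using lenM m1 .
  have L2: "length m2 = Suc n" using lenM m2 .
  let ?d1 = "take (Suc b - a) (drop a m1)"
  let ?d2 = "take (Suc b - a) (drop a m2)"
  have A: "m1!a = m2!a" "m1!b = m2!b" using agree ab by auto
  have d1: "?d1 \<in> maxchains P le (m1!a) (m1!b)" using seg[OF m1, of a b] ab by simp
  have d2: "?d2 \<in> maxchains P le (m1!a) (m1!b)" using seg[OF m2, of a b] ab A by simp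
  have srt: "sorted (labels lam (take (Suc b - a) (drop a m)))"
    if m: "m \<in> MC" and sm: "\<And>k. a \<le> k \<Longrightarrow> Suc k < b \<Longrightarrow> labels lam m ! k \<le> labels lam m ! Suc k" for m
  proof -
    have L: "length m = Suc n" using lenM m .
    show ?thesis unfolding sorted_iff_nth_Suc
    proof (intro allI impI)
      fix i assume i: "Suc i < length (labels lam (take (Suc b - a) (drop a m)))"
      then have i2: "Suc i < b - a" using L ab by simp
      then show "labels lam (take (Suc b - a) (drop a m)) ! i \<le> labels lam (take (Suc b - a) (drop a m)) ! Suc i"
        using sm[of "a+i"] L ab by (simp add: labels_nth)
    qed
  qed
  have "?d1 = ?d2"
    using EL_unique[OF M_P[OF m1] M_P[OF m1] chain_le[OF m1] d1 srt[OF m1 s1] d2 srt[OF m2 s2]] ab by simp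
  have mid: "m1!j = m2!j" if "a \<le> j" "j \<le> b" for j
  proof -
    have "m1!j = ?d1!(j-a)" using L1 ab that by simp
    moreover have "m2!j = ?d2!(j-a)" using L2 ab that by simp
    ultimately show ?thesis using \<open>?d1 = ?d2\<close> by simp
  qed
  show ?thesis
  proof (rule nth_equalityI)
    show "length m1 = length m2" using L1 L2 by simp
    fix j assume "j < length m1"
    then show "m1!j = m2!j" using agree mid L1 by (cases "j \<le> a \<or> b \<le> j") auto
  qed
qed


lemma succ_take: "successively R xs \<Longrightarrow> successively R (take k xs)"
  using successively_append_iff[of R "take k xs" "drop k xs"] by simp
lemma succ_drop: "successively R xs \<Longrightarrow> successively R (drop k xs)"
  using successively_append_iff[of R "take k xs" "drop k xs"] by simp

lemma splice_len:
  assumes c: "c \<in> MC" and ab: "a \<le> b" "b \<le> n" and d: "d \<in> maxchains P le (c!a) (c!b)"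
  shows "length d = Suc b - a"
proof -
  have L: "length c = Suc n" using lenM c .
  have sc: "successively (covers P le) c" and cne: "c \<noteq> []" and hc: "hd c = zero" and lc: "last c = one"
    using c by (auto simp: maxchains_iff)
  have sd: "successively (covers P le) d" and dne: "d \<noteq> []" and hd: "hd d = c!a" and ld: "last d = c!b"
    using d by (auto simp: maxchains_iff)
  let ?A = "take a c" and ?B = "drop (Suc b) c"
  have s1: "successively (covers P le) (d @ ?B)"
  proof -
    have "?B \<noteq> [] \<Longrightarrow> covers P le (last d) (hd ?B)"
    proof -
      assume "?B \<noteq> []"
      then have "b < n" using L by simp
      then show ?thesis using ld M_nth(3)[OF c, of b] L by (simp add: hd_drop_conv_nth)
    qed
    then show ?thesis using sd succ_drop[OF sc] by (auto simp: successively_append_iff)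
  qed
  have s2: "successively (covers P le) (?A @ d @ ?B)"
  proof -
    have "?A \<noteq> [] \<Longrightarrow> covers P le (last ?A) (hd (d @ ?B))"
    proof -
      assume "?A \<noteq> []"
      then have "0 < a" by simp
      moreover have "a \<le> n" using ab by simp
      ultimately have "last ?A = c!(a-1)" using L \<open>?A \<noteq> []\<close> by (subst last_conv_nth) auto
      then show ?thesis using hd dne M_nth(3)[OF c, of "a - 1"] \<open>0 < a\<close> \<open>a \<le> n\<close> by simp
    qed
    then show ?thesis using s1 succ_take[OF sc] by (auto simp: successively_append_iff)
  qed
  have "hd (?A @ d @ ?B) = zero"
  proof (cases "a = 0")
    case True then show ?thesis using hd dne M_nth(1)[OF c] by simp
  next
    case False then show ?thesis using cne hc by simp
  qed
  moreover have "last (?A @ d @ ?B) = one"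
  proof (cases "b = n")
    case True then show ?thesis using ld dne M_nth(2)[OF c] L by simp
  next
    case False then have "?B \<noteq> []" using ab L by simp
    then show ?thesis using lc L by (simp add: last_drop)
  qed
  ultimately have "?A @ d @ ?B \<in> MC" using s2 dne by (simp add: maxchains_iff)
  from lenM[OF this] show ?thesis using L ab by simp
qed


lemma M_le: "c \<in> MC \<Longrightarrow> a \<le> b \<Longrightarrow> b \<le> n \<Longrightarrow> le (c!a) (c!b)" by (rule chain_le)

lemma U_exists:
  assumes m: "m \<in> MC" and i: "1 \<le> i" "i < n"
  shows "\<exists>m'\<in>MC. (\<forall>j. j \<noteq> i \<longrightarrow> m'!j = m!j) \<and> \<not> has_descent lam m' i"
proof -
  have L: "length m = Suc n" using lenM m .
  have ii: "i - 1 \<le> n" "i + 1 \<le> n" "i - 1 \<le> i + 1" using i by auto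
  obtain d where d: "d \<in> maxchains P le (m!(i-1)) (m!(i+1))" and sd: "sorted (labels lam d)"
    using EL_ex[OF M_P[OF m ii(1)] M_P[OF m ii(2)] chain_le[OF m ii(3) ii(2)]] by blast
  have Ld: "length d = 3" using splice_len[OF m _ _ d] i by simp
  have d0: "d!0 = m!(i-1)" using d Ld by (auto simp: maxchains_def hd_conv_nth)
  have d2: "d!2 = m!(i+1)" using d Ld by (auto simp: maxchains_def last_conv_nth)
  have c01: "covers P le (d!0) (d!1)" and c12: "covers P le (d!1) (d!2)"
    using d Ld unfolding maxchains_def by (auto simp: numeral_eq_Suc)
  have lab01: "labels lam d ! 0 \<le> labels lam d ! 1" using sd Ld by (simp add: sorted_nth_mono)
  define m' where "m' = m[i := d!1]"
  have Lm': "length m' = Suc n" using L by (simp add: m'_def)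
  have nth': "\<And>j. m'!j = (if j = i then d!1 else m!j)" using L i by (simp add: m'_def nth_list_update)
  have "m' \<in> MC"
  proof (rule M_intro[OF Lm'])
    show "m'!0 = zero" using nth' M_nth(1)[OF m] i by simp
    show "m'!n = one" using nth' M_nth(2)[OF m] i by simp
    fix k assume k: "k < n"
    consider "k = i - 1" | "k = i" | "k \<noteq> i - 1 \<and> k \<noteq> i" by blast
    then show "covers P le (m'!k) (m'!Suc k)"
    proof cases
      case 1
      then have "m'!k = m!(i-1)" "m'!Suc k = d!1" using nth' i by auto
      then show ?thesis using c01 d0 by simp
    next
      case 2
      then have "m'!k = d!1" "m'!Suc k = m!(i+1)" using nth' i by auto
      then show ?thesis using c12 d2 by simp
    next
      case 3 then have "Suc k \<noteq> i" using i by auto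
      then show ?thesis using 3 nth' M_nth(3)[OF m k] by simp
    qed
  qed
  moreover have "\<forall>j. j \<noteq> i \<longrightarrow> m'!j = m!j" using nth' by simp
  moreover have "\<not> has_descent lam m' i"
  proof -
    have e: "m'!(i-1) = m!(i-1)" "m'!i = d!1" "m'!(i+1) = m!(i+1)" "Suc (i-1) = i" using nth' i by auto
    have "labels lam m' ! (i-1) = lam (m'!(i-1)) (m'!Suc (i-1))" using Lm' i by (simp add: labels_nth)
    then have "labels lam m' ! (i-1) = lam (m!(i-1)) (d!1)" using e by simp
    moreover have "labels lam m' ! i = lam (m'!i) (m'!Suc i)" using Lm' i by (simp add: labels_nth)
    then have "labels lam m' ! i = lam (d!1) (m!(i+1))" using e by simp
    moreover have "labels lam d ! 0 = lam (d!0) (d!1)" "labels lam d ! 1 = lam (d!1) (d!2)"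
      using Ld by (simp_all add: labels_nth numeral_2_eq_2)
    ultimately show ?thesis using lab01 d0 d2 by (simp add: has_descent_def)
  qed
  ultimately show ?thesis by blast
qed

lemma U_char:
  assumes m: "m \<in> MC" and i: "1 \<le> i" "i < n" and m': "m' \<in> MC"
    and ag: "\<forall>j. j \<noteq> i \<longrightarrow> m'!j = m!j" and nd: "\<not> has_descent lam m' i"
  shows "UU i m = m'"
  unfolding U_op_def
proof (rule the_equality)
  show "m' \<in> MC \<and> length m' = length m \<and> (\<forall>j. j \<noteq> i \<longrightarrow> m'!j = m!j) \<and> \<not> has_descent lam m' i"
    using m m' ag nd lenM by simp
  fix x assume x: "x \<in> MC \<and> length x = length m \<and> (\<forall>j. j \<noteq> i \<longrightarrow> x!j = m!j) \<and> \<not> has_descent lam x i"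
  show "x = m'"
  proof (rule window[of x m' "i-1" "i+1"])
    show "x \<in> MC" "m' \<in> MC" using x m' by auto
    show "i - 1 < i + 1" "i + 1 \<le> n" using i by auto
    fix j assume "j \<le> n" "j \<le> i - 1 \<or> i + 1 \<le> j"
    then have "j \<noteq> i" using i by auto
    then show "x!j = m'!j" using x ag by simp
  next
    fix k assume "i - 1 \<le> k" "Suc k < i + 1"
    then have "k = i - 1" "Suc k = i" using i by auto
    then show "labels lam x ! k \<le> labels lam x ! Suc k" "labels lam m' ! k \<le> labels lam m' ! Suc k"
      using x nd by (auto simp: has_descent_def)
  qed
qed

lemma U_props:
  assumes m: "m \<in> MC" and i: "1 \<le> i" "i < n"
  shows "UU i m \<in> MC" "\<And>j. j \<noteq> i \<Longrightarrow> UU i m ! j = m!j" "\<not> has_descent lam (UU i m) i"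
proof -
  obtain m' where "m' \<in> MC" "\<forall>j. j \<noteq> i \<longrightarrow> m'!j = m!j" "\<not> has_descent lam m' i"
    using U_exists[OF m i] by blast
  moreover have "UU i m = m'" using U_char[OF m i calculation] .
  ultimately show "UU i m \<in> MC" "\<And>j. j \<noteq> i \<Longrightarrow> UU i m ! j = m!j" "\<not> has_descent lam (UU i m) i" by auto
qed

lemma lab_agree:
  assumes "m \<in> MC" "m' \<in> MC" "\<forall>j. j \<noteq> i \<longrightarrow> m'!j = m!j" "k < n" "k \<noteq> i" "Suc k \<noteq> i"
  shows "labels lam m' ! k = labels lam m ! k"
  using assms lenM[OF assms(1)] lenM[OF assms(2)] by (simp add: labels_nth)

end

lemma swap_minmax:
  fixes w w' :: "int list"
  assumes len: "length w' = length w" and dw: "distinct w" and dw': "distinct w'"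
    and st: "set w' = set w" and p: "Suc p < length w"
    and ag: "\<forall>k<length w. k \<noteq> p \<and> k \<noteq> Suc p \<longrightarrow> w'!k = w!k"
    and srt: "w'!p \<le> w'!Suc p"
  shows "w'!p = min (w!p) (w!Suc p) \<and> w'!Suc p = max (w!p) (w!Suc p)"
proof -
  have mem: "w'!q = w!p \<or> w'!q = w!Suc p" if q: "q = p \<or> q = Suc p" for q
  proof -
    have "w'!q \<in> set w" using st q p len by (metis Suc_lessD nth_mem)
    then obtain k where k: "k < length w" "w!k = w'!q" by (auto simp: in_set_conv_nth)
    show ?thesis
    proof (rule ccontr)
      assume "\<not> ?thesis"
      then have "k \<noteq> p" "k \<noteq> Suc p" using k by auto
      then have "w'!k = w'!q" using ag k by simp
      moreover have "q < length w'" using q p len by auto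
      ultimately have "k = q" using nth_eq_iff_index_eq[OF dw', of k q] k len by simp
      then show False using \<open>k \<noteq> p\<close> \<open>k \<noteq> Suc p\<close> q by simp
    qed
  qed
  have "w'!p \<noteq> w'!Suc p" using dw' p len by (simp add: nth_eq_iff_index_eq)
  moreover have "w!p \<noteq> w!Suc p" using dw p by (simp add: nth_eq_iff_index_eq)
  ultimately show ?thesis using mem[of p] mem[of "Suc p"] srt by auto
qed

context snel begin

lemma U_lab:
  assumes m: "m \<in> MC" and i: "1 \<le> i" "i < n"
  shows "labels lam (UU i m) ! (i-1) = min (labels lam m ! (i-1)) (labels lam m ! i)"
    "labels lam (UU i m) ! i = max (labels lam m ! (i-1)) (labels lam m ! i)"
    "\<And>k. k < n \<Longrightarrow> k \<noteq> i - 1 \<Longrightarrow> k \<noteq> i \<Longrightarrow> labels lam (UU i m) ! k = labels lam m ! k"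
proof -
  note UP = U_props[OF m i]
  show ag: "\<And>k. k < n \<Longrightarrow> k \<noteq> i - 1 \<Longrightarrow> k \<noteq> i \<Longrightarrow> labels lam (UU i m) ! k = labels lam m ! k"
    using lab_agree[OF m UP(1)] UP(2) i by (metis Suc_pred' diff_Suc_1 less_le_trans zero_less_one)
  have L: "length (labels lam m) = n" "length (labels lam (UU i m)) = n"
    using lenM[OF m] lenM[OF UP(1)] by auto
  have "Suc (i-1) = i" using i by simp
  then have X: "labels lam (UU i m) ! (i-1) = min (labels lam m ! (i-1)) (labels lam m ! Suc (i-1)) \<and>
     labels lam (UU i m) ! Suc (i-1) = max (labels lam m ! (i-1)) (labels lam m ! Suc (i-1))"
    using swap_minmax[of "labels lam (UU i m)" "labels lam m" "i-1"] L perm[OF m] perm[OF UP(1)] ag i UP(3)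
    by (auto simp: has_descent_def)
  then show "labels lam (UU i m) ! (i-1) = min (labels lam m ! (i-1)) (labels lam m ! i)"
    "labels lam (UU i m) ! i = max (labels lam m ! (i-1)) (labels lam m ! i)"
    using \<open>Suc (i-1) = i\<close> by auto
qed


lemma U_idem: assumes m: "m \<in> MC" and i: "1 \<le> i" "i < n" shows "UU i (UU i m) = UU i m"
  using U_char[OF U_props(1)[OF m i] i U_props(1)[OF m i]] U_props(3)[OF m i] by simp

lemma U_comm1:
  assumes m: "m \<in> MC" and i: "1 \<le> i" "i < n" and j: "1 \<le> j" "j < n" and ij: "i + 2 \<le> j \<or> j + 2 \<le> i"
  shows "UU i (UU j m) = (UU j m)[i := UU i m ! i]"
proof -
  define m1 where "m1 = UU j m"
  define m2 where "m2 = UU i m"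
  note P1 = U_props[OF m j, folded m1_def] and P2 = U_props[OF m i, folded m2_def]
  define m3 where "m3 = m1[i := m2!i]"
  have L1: "length m1 = Suc n" using lenM P1(1) .
  have L3: "length m3 = Suc n" using L1 by (simp add: m3_def)
  have n3: "\<And>k. m3!k = (if k = i then m2!i else m1!k)" using L1 i by (simp add: m3_def nth_list_update)
  have near: "\<And>k. k = i - 1 \<or> k = i \<or> k = i + 1 \<Longrightarrow> m3!k = m2!k"
  proof -
    fix k assume k: "k = i - 1 \<or> k = i \<or> k = i + 1"
    show "m3!k = m2!k"
    proof (cases "k = i")
      case True then show ?thesis using n3 by simp
    next
      case False
      then have "k \<noteq> j" using k ij i by auto
      then show ?thesis using n3 False P1(2) P2(2) by simp
    qed
  qed
  have "m3 \<in> MC"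
  proof (rule M_intro[OF L3])
    show "m3!0 = zero" using n3 M_nth(1)[OF P1(1)] i by simp
    show "m3!n = one" using n3 M_nth(2)[OF P1(1)] i by simp
    fix k assume k: "k < n"
    show "covers P le (m3!k) (m3!Suc k)"
    proof (cases "k = i - 1 \<or> k = i")
      case True
      then have "m3!k = m2!k" "m3!Suc k = m2!Suc k" using near i by auto
      then show ?thesis using M_nth(3)[OF P2(1) k] by simp
    next
      case False
      then have "k \<noteq> i" "Suc k \<noteq> i" using i by auto
      then show ?thesis using n3 M_nth(3)[OF P1(1) k] by simp
    qed
  qed
  moreover have "\<forall>k. k \<noteq> i \<longrightarrow> m3!k = m1!k" using n3 by simp
  moreover have "\<not> has_descent lam m3 i"
  proof -
    have L2: "length m2 = Suc n" using lenM P2(1) .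
    have "labels lam m3 ! (i-1) = labels lam m2 ! (i-1)" "labels lam m3 ! i = labels lam m2 ! i"
      using near[of "i-1"] near[of i] near[of "i+1"] L2 L3 i by (simp_all add: labels_nth)
    then show ?thesis using P2(3) by (simp add: has_descent_def)
  qed
  ultimately have "UU i m1 = m3" using U_char[OF P1(1) i] by blast
  then show ?thesis by (simp add: m1_def m3_def m2_def)
qed

lemma U_comm:
  assumes m: "m \<in> MC" and i: "1 \<le> i" "i < n" and j: "1 \<le> j" "j < n" and ij: "i + 2 \<le> j \<or> j + 2 \<le> i"
  shows "UU i (UU j m) = UU j (UU i m)"
proof -
  have A: "UU i (UU j m) = (UU j m)[i := UU i m ! i]" using U_comm1[OF m i j ij] .
  have B: "UU j (UU i m) = (UU i m)[j := UU j m ! j]" using U_comm1[OF m j i] ij by auto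
  have L: "length (UU j m) = Suc n" "length (UU i m) = Suc n"
    using lenM U_props(1)[OF m i] U_props(1)[OF m j] by auto
  have "i \<noteq> j" using ij by auto
  show ?thesis unfolding A B
    by (rule nth_equalityI) (use L i j \<open>i \<noteq> j\<close> U_props(2)[OF m i] U_props(2)[OF m j] in \<open>auto simp: nth_list_update\<close>)
qed

lemma U_braid:
  assumes m: "m \<in> MC" and i: "1 \<le> i" "i + 2 \<le> n"
  shows "UU i (UU (i+1) (UU i m)) = UU (i+1) (UU i (UU (i+1) m))"
proof -
  have i1: "1 \<le> i" "i < n" and i2: "1 \<le> i + 1" "i + 1 < n" using i by auto
  define a1 where "a1 = UU i m"
  define a2 where "a2 = UU (i+1) a1"
  define A where "A = UU i a2"
  define b1 where "b1 = UU (i+1) m"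
  define b2 where "b2 = UU i b1"
  define B where "B = UU (i+1) b2"
  note Pa1 = U_props[OF m i1, folded a1_def]
  note Pa2 = U_props[OF Pa1(1) i2, folded a2_def]
  note PA = U_props[OF Pa2(1) i1, folded A_def]
  note Pb1 = U_props[OF m i2, folded b1_def]
  note Pb2 = U_props[OF Pb1(1) i1, folded b2_def]
  note PB = U_props[OF Pb2(1) i2, folded B_def]
  note La1 = U_lab[OF m i1, folded a1_def]
  note La2 = U_lab[OF Pa1(1) i2, folded a2_def]
  note LA = U_lab[OF Pa2(1) i1, folded A_def]
  note Lb1 = U_lab[OF m i2, folded b1_def]
  note Lb2 = U_lab[OF Pb1(1) i1, folded b2_def]
  note LB = U_lab[OF Pb2(1) i2, folded B_def]
  have "A = B"
  proof (rule window[of A B "i-1" "i+2"])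
    show "A \<in> MC" "B \<in> MC" using PA(1) PB(1) .
    show "i - 1 < i + 2" "i + 2 \<le> n" using i by auto
    fix j assume "j \<le> n" "j \<le> i - 1 \<or> i + 2 \<le> j"
    then have "j \<noteq> i" "j \<noteq> i + 1" using i by auto
    then show "A!j = B!j" using PA(2) Pa2(2) Pa1(2) PB(2) Pb2(2) Pb1(2) by simp
  next
    fix k assume k: "i - 1 \<le> k" "Suc k < i + 2"
    then have "k = i - 1 \<or> k = i" by auto
    then show "labels lam A ! k \<le> labels lam A ! Suc k"
    proof
      assume "k = i - 1" then show ?thesis using PA(3) i by (simp add: has_descent_def)
    next
      assume "k = i"
      have e1: "labels lam A ! i = max (labels lam a2 ! (i-1)) (labels lam a2 ! i)" using LA(2) .
      have e2: "labels lam A ! (i+1) = labels lam a2 ! (i+1)" using LA(3)[of "i+1"] i by simp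
      have e3: "labels lam a2 ! i \<le> labels lam a2 ! (i+1)" using Pa2(3) by (simp add: has_descent_def)
      have e4: "labels lam a2 ! (i-1) = labels lam a1 ! (i-1)" using La2(3)[of "i-1"] i by simp
      have e5: "labels lam a2 ! (i+1) = max (labels lam a1 ! i) (labels lam a1 ! (i+1))" using La2(2) by simp
      have e6: "labels lam a1 ! (i-1) \<le> labels lam a1 ! i" using Pa1(3) by (simp add: has_descent_def)
      show ?thesis using \<open>k = i\<close> e1 e2 e3 e4 e5 e6 by (auto simp: max_def)
    qed
  next
    fix k assume k: "i - 1 \<le> k" "Suc k < i + 2"
    then have "k = i - 1 \<or> k = i" by auto
    then show "labels lam B ! k \<le> labels lam B ! Suc k"
    proof
      assume "k = i" then show ?thesis using PB(3) i by (simp add: has_descent_def)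
    next
      assume "k = i - 1"
      have e1: "labels lam B ! (i-1) = labels lam b2 ! (i-1)" using LB(3)[of "i-1"] i by simp
      have e2: "labels lam b2 ! (i-1) = min (labels lam b1 ! (i-1)) (labels lam b1 ! i)" using Lb2(1) .
      have e3: "labels lam B ! i = min (labels lam b2 ! i) (labels lam b2 ! (i+1))" using LB(1) by simp
      have e4: "labels lam b2 ! i = max (labels lam b1 ! (i-1)) (labels lam b1 ! i)" using Lb2(2) .
      have e5: "labels lam b2 ! (i+1) = labels lam b1 ! (i+1)" using Lb2(3)[of "i+1"] i by simp
      have e6: "labels lam b1 ! i \<le> labels lam b1 ! (i+1)" using Pb1(3) by (simp add: has_descent_def)
      have "Suc (i-1) = i" using i by simp
      then show ?thesis using \<open>k = i - 1\<close> e1 e2 e3 e4 e5 e6 by (auto simp: max_def min_def)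
    qed
  qed
  then show ?thesis by (simp add: A_def a2_def a1_def B_def b2_def b1_def)
qed


lemma finM: "finite MC"
proof -
  have "MC \<subseteq> {c. set c \<subseteq> P \<and> length c = Suc n}"
  proof
    fix c assume c: "c \<in> MC"
    have "set c \<subseteq> P"
    proof
      fix x assume "x \<in> set c"
      then obtain k where "k < length c" "c!k = x" by (auto simp: in_set_conv_nth)
      then show "x \<in> P" using M_P[OF c, of k] lenM[OF c] by simp
    qed
    then show "c \<in> {c. set c \<subseteq> P \<and> length c = Suc n}" using lenM[OF c] by simp
  qed
  moreover have "finite {c. set c \<subseteq> P \<and> length c = Suc n}"
    using finite_lists_length_eq[OF finP] .
  ultimately show ?thesis by (rule finite_subset)
qed

lemma U_desc:
  assumes m: "m \<in> MC" and i: "1 \<le> i" "i < n" and ne: "UU i m \<noteq> m"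
  shows "labels lam m ! i < labels lam m ! (i-1)"
proof (rule ccontr)
  assume "\<not> ?thesis"
  then have "\<not> has_descent lam m i" by (simp add: has_descent_def)
  then have "UU i m = m" using U_char[OF m i m] by simp
  then show False using ne by simp
qed

lemma U_omega:
  assumes m: "m \<in> MC" and i: "1 \<le> i" "i < n" and ne: "UU i m \<noteq> m"
  shows "omega lam n (UU i m) = omega lam n m \<circ> transpose i (i + 1)"
proof
  fix k
  have d: "labels lam m ! i < labels lam m ! (i-1)" using U_desc[OF assms] .
  note LU = U_lab[OF m i]
  have si: "Suc (i - 1) = i" using i by simp
  consider "k = i" | "k = i + 1" | "k \<noteq> i \<and> k \<noteq> i + 1" by blast
  then show "omega lam n (UU i m) k = (omega lam n m \<circ> transpose i (i + 1)) k"
  proof cases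
    case 1 then show ?thesis using i LU(1) d by (simp add: omega_def transpose_def)
  next
    case 2 then show ?thesis using i LU(2) d by (simp add: omega_def transpose_def)
  next
    case 3
    then have t: "transpose i (i+1) k = k" by (simp add: transpose_def)
    show ?thesis
    proof (cases "1 \<le> k \<and> k \<le> n")
      case True
      then have "labels lam (UU i m) ! (k-1) = labels lam m ! (k-1)" using LU(3)[of "k-1"] 3 i by auto
      then show ?thesis using t True by (simp add: omega_def)
    next
      case False
      then have "omega lam n (UU i m) k = k" "omega lam n m k = k" by (auto simp: omega_def)
      then show ?thesis using t by simp
    qed
  qed
qed

end

lemma inv_swap:
  fixes \<sigma> :: "nat \<Rightarrow> nat"
  assumes i: "1 \<le> i" "i + 1 \<le> n" and d: "\<sigma> (i + 1) < \<sigma> i"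
  shows "inversions n (\<sigma> \<circ> transpose i (i + 1)) + 1 = inversions n \<sigma>"
proof -
  let ?t = "transpose i (i + 1)"
  define I1 where "I1 = {(a, b). 1 \<le> a \<and> a < b \<and> b \<le> n \<and> (\<sigma> \<circ> ?t) a > (\<sigma> \<circ> ?t) b}"
  define I0 where "I0 = {(a, b). 1 \<le> a \<and> a < b \<and> b \<le> n \<and> \<sigma> a > \<sigma> b}"
  define f where "f = (\<lambda>(a::nat, b::nat). (?t a, ?t b))"
  have tt: "\<And>x. ?t (?t x) = x" by (simp add: transpose_def)
  have fin: "finite I1" unfolding I1_def
    by (rule finite_subset[of _ "{1..n} \<times> {1..n}"]) auto
  have nI1: "(i, i+1) \<notin> I1" using d by (simp add: I1_def transpose_def)
  have eq: "I0 = insert (i, i+1) (f ` I1)"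
  proof
    show "I0 \<subseteq> insert (i, i+1) (f ` I1)"
    proof
      fix p assume p: "p \<in> I0"
      obtain a b where ab: "p = (a, b)" by (cases p)
      show "p \<in> insert (i, i+1) (f ` I1)"
      proof (cases "p = (i, i+1)")
        case True then show ?thesis by simp
      next
        case False
        have "(?t a, ?t b) \<in> I1" using p ab False i tt unfolding I0_def I1_def
          by (auto simp: transpose_def split: if_splits)
        moreover have "p = f (?t a, ?t b)" using ab tt by (simp add: f_def)
        ultimately show ?thesis by blast
      qed
    qed
    show "insert (i, i+1) (f ` I1) \<subseteq> I0"
      using d i unfolding I0_def I1_def f_def
      by (auto simp: transpose_def split: if_splits)
  qed
  have inj: "inj_on f I1"
  proof (rule inj_onI)
    fix p q assume "p \<in> I1" "q \<in> I1" and fpq: "f p = f q"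
    obtain a b c e where pq: "p = (a,b)" "q = (c,e)" by (cases p, cases q)
    then have "?t a = ?t c" "?t b = ?t e" using fpq by (simp_all add: f_def)
    then have "?t (?t a) = ?t (?t c)" "?t (?t b) = ?t (?t e)" by simp_all
    then have "a = c" "b = e" using tt by simp_all
    then show "p = q" using pq by simp
  qed
  have "(i, i+1) \<notin> f ` I1"
  proof
    assume "(i, i+1) \<in> f ` I1"
    then obtain a b where "(a, b) \<in> I1" "?t a = i" "?t b = i + 1" by (auto simp: f_def)
    then have "?t (?t a) = ?t i" "?t (?t b) = ?t (i+1)" by simp_all
    then have "a = i + 1" "b = i" using tt by (simp_all add: transpose_def)
    then show False using \<open>(a, b) \<in> I1\<close> by (simp add: I1_def)
  qed
  then have "card I0 = Suc (card I1)" using eq fin inj by (simp add: card_image)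
  then show ?thesis by (simp add: inversions_def I0_def I1_def)
qed

definition pf :: "'b set \<Rightarrow> ('b \<Rightarrow> 'b) \<Rightarrow> ('b \<Rightarrow> complex) \<Rightarrow> ('b \<Rightarrow> complex)" where
  "pf S f v = (\<lambda>y. if y \<in> S then sum v {x \<in> S. f x = y} else 0)"

lemma pf_comp:
  assumes S: "finite S" and g: "\<And>x. x \<in> S \<Longrightarrow> g x \<in> S"
  shows "pf S f (pf S g v) = pf S (f \<circ> g) v"
proof
  fix y
  show "pf S f (pf S g v) y = pf S (f \<circ> g) v y"
  proof (cases "y \<in> S")
    case False then show ?thesis by (simp add: pf_def)
  next
    case True
    let ?T = "{z \<in> S. f z = y}" and ?Sg = "{x \<in> S. f (g x) = y}"
    have "pf S f (pf S g v) y = (\<Sum>z\<in>?T. sum v {x \<in> S. g x = z})"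
      using True by (simp add: pf_def)
    also have "\<dots> = (\<Sum>z\<in>?T. sum v {x. x \<in> ?Sg \<and> g x = z})"
      by (rule sum.cong) (auto intro!: arg_cong[where f = "sum v"])
    also have "\<dots> = sum v ?Sg"
      by (rule sum.group) (use S g in auto)
    finally show ?thesis using True by (simp add: pf_def)
  qed
qed

lemma pf_neg: "pf S f (- v) = - pf S f v"
  by (auto simp: pf_def sum_negf)

lemma pf_cong: "(\<And>x. x \<in> S \<Longrightarrow> f x = g x) \<Longrightarrow> pf S f v = pf S g v"
  unfolding pf_def by (intro ext) (auto intro!: arg_cong[where f = "sum _"])

lemma U_lin_pf: "U_lin P le zero one lam i = pf (maxchains P le zero one) (U_op P le zero one lam i)"
  by (intro ext) (simp add: U_lin_def pf_def)

theorem mainTheorem2: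
  fixes P :: "'a set" and le :: "'a \<Rightarrow> 'a \<Rightarrow> bool" and zero one :: 'a
    and n :: nat and lam :: "'a \<Rightarrow> 'a \<Rightarrow> int"
  defines "M \<equiv> maxchains P le zero one"
    and "U \<equiv> U_op P le zero one lam"
    and "T \<equiv> T_act P le zero one lam"
  assumes graded: "bounded_graded_poset P le zero one n"
    and SnEL: "Sn_EL_labeling P le zero one n lam"
  shows
    "(\<forall>i. 1 \<le> i \<and> i \<le> n - 1 \<longrightarrow> (\<forall>m\<in>M. U i m \<in> M \<and> U i (U i m) = U i m))
   \<and> (\<forall>i j. 1 \<le> i \<and> i \<le> n - 1 \<and> 1 \<le> j \<and> j \<le> n - 1 \<and> (i + 2 \<le> j \<or> j + 2 \<le> i) \<longrightarrow>
        (\<forall>m\<in>M. U i (U j m) = U j (U i m)))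
   \<and> (\<forall>i. 1 \<le> i \<and> i + 2 \<le> n \<longrightarrow>
        (\<forall>m\<in>M. U i (U (i + 1) (U i m)) = U (i + 1) (U i (U (i + 1) m))))
   \<and> (\<forall>v. (\<forall>m. m \<notin> M \<longrightarrow> v m = 0) \<longrightarrow>
        (\<forall>i. 1 \<le> i \<and> i \<le> n - 1 \<longrightarrow> T i (T i v) = - T i v)
      \<and> (\<forall>i j. 1 \<le> i \<and> i \<le> n - 1 \<and> 1 \<le> j \<and> j \<le> n - 1 \<and> (i + 2 \<le> j \<or> j + 2 \<le> i) \<longrightarrow>
            T i (T j v) = T j (T i v))
      \<and> (\<forall>i. 1 \<le> i \<and> i + 2 \<le> n \<longrightarrow>
            T i (T (i + 1) (T i v)) = T (i + 1) (T i (T (i + 1) v))))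
   \<and> (\<forall>i. 1 \<le> i \<and> i \<le> n - 1 \<longrightarrow> (\<forall>m\<in>M. U i m \<noteq> m \<longrightarrow>
        omega lam n (U i m) = omega lam n m \<circ> transpose i (i + 1)
      \<and> inversions n (omega lam n (U i m)) + 1 = inversions n (omega lam n m)))"
proof -
  interpret snel P le zero one n lam using graded SnEL by unfold_locales
  have Tdef: "\<And>i v. T i v = - pf M (U i) v"
    by (simp add: T_def T_act_def U_lin_pf M_def U_def)
  have TT: "T i (T j v) = pf M (U i \<circ> U j) v" if "1 \<le> j" "j < n" for i j v
  proof -
    have "T i (T j v) = pf M (U i) (pf M (U j) v)" by (simp add: Tdef pf_neg fun_eq_iff)
    also have "\<dots> = pf M (U i \<circ> U j) v"
      by (rule pf_comp) (use finM U_props(1) that in \<open>auto simp: M_def U_def\<close>)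
    finally show ?thesis .
  qed
  have TTT: "T i (T j (T k v)) = - pf M (U i \<circ> (U j \<circ> U k)) v"
    if "1 \<le> j" "j < n" "1 \<le> k" "k < n" for i j k v
  proof -
    have e: "T j (T k v) = pf M (U j \<circ> U k) v" by (rule TT[OF that(3,4)])
    have "T i (T j (T k v)) = - pf M (U i) (pf M (U j \<circ> U k) v)"
      by (subst e) (rule Tdef)
    also have "\<dots> = - pf M (U i \<circ> (U j \<circ> U k)) v"
      by (subst pf_comp) (use finM U_props(1) that in \<open>auto simp: M_def U_def\<close>)
    finally show ?thesis .
  qed
  have P1: "\<forall>i. 1 \<le> i \<and> i \<le> n - 1 \<longrightarrow> (\<forall>m\<in>M. U i m \<in> M \<and> U i (U i m) = U i m)"
  proof (intro allI impI ballI conjI)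
    fix i m assume i: "1 \<le> i \<and> i \<le> n - 1" and m: "m \<in> M"
    then have i': "1 \<le> i" "i < n" by linarith+
    show "U i m \<in> M" using U_props(1)[of m i] m i' by (simp add: M_def U_def)
    show "U i (U i m) = U i m" using U_idem[of m i] m i' by (simp add: M_def U_def)
  qed
  have lt: "\<And>i. 1 \<le> i \<Longrightarrow> i \<le> n - 1 \<Longrightarrow> i < n" by linarith
  have P2: "\<forall>i j. 1 \<le> i \<and> i \<le> n - 1 \<and> 1 \<le> j \<and> j \<le> n - 1 \<and> (i + 2 \<le> j \<or> j + 2 \<le> i) \<longrightarrow>
        (\<forall>m\<in>M. U i (U j m) = U j (U i m))"
    using U_comm lt unfolding M_def U_def by blast
  have P3: "\<forall>i. 1 \<le> i \<and> i + 2 \<le> n \<longrightarrow>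
        (\<forall>m\<in>M. U i (U (i + 1) (U i m)) = U (i + 1) (U i (U (i + 1) m)))"
    using U_braid unfolding M_def U_def by blast
  have P4: "(\<forall>i. 1 \<le> i \<and> i \<le> n - 1 \<longrightarrow> T i (T i v) = - T i v)
      \<and> (\<forall>i j. 1 \<le> i \<and> i \<le> n - 1 \<and> 1 \<le> j \<and> j \<le> n - 1 \<and> (i + 2 \<le> j \<or> j + 2 \<le> i) \<longrightarrow>
            T i (T j v) = T j (T i v))
      \<and> (\<forall>i. 1 \<le> i \<and> i + 2 \<le> n \<longrightarrow>
            T i (T (i + 1) (T i v)) = T (i + 1) (T i (T (i + 1) v)))" for v
  proof (intro conjI allI impI)
    fix i assume i: "1 \<le> i \<and> i \<le> n - 1"
    then have i': "1 \<le> i" "i < n" using lt by auto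
    have "T i (T i v) = pf M (U i \<circ> U i) v" using TT i' by blast
    also have "\<dots> = pf M (U i) v"
      by (rule pf_cong) (use U_idem[OF _ i'] in \<open>simp add: M_def U_def\<close>)
    finally show "T i (T i v) = - T i v" by (simp add: Tdef fun_eq_iff)
  next
    fix i j assume ij: "1 \<le> i \<and> i \<le> n - 1 \<and> 1 \<le> j \<and> j \<le> n - 1 \<and> (i + 2 \<le> j \<or> j + 2 \<le> i)"
    then have i': "1 \<le> i" "i < n" and j': "1 \<le> j" "j < n" using lt by auto
    have "T i (T j v) = pf M (U i \<circ> U j) v" using TT j' by blast
    also have "\<dots> = pf M (U j \<circ> U i) v"
      by (rule pf_cong) (use U_comm[OF _ i' j'] ij in \<open>simp add: M_def U_def\<close>)
    also have "\<dots> = T j (T i v)" using TT i' by simp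
    finally show "T i (T j v) = T j (T i v)" .
  next
    fix i assume i: "1 \<le> i \<and> i + 2 \<le> n"
    then have i1: "1 \<le> i" "i < n" and i2: "1 \<le> i + 1" "i + 1 < n" by auto
    have "T i (T (i + 1) (T i v)) = - pf M (U i \<circ> (U (i+1) \<circ> U i)) v" using TTT[OF i2 i1] .
    also have "\<dots> = - pf M (U (i+1) \<circ> (U i \<circ> U (i+1))) v"
      using pf_cong[of M "U i \<circ> (U (i+1) \<circ> U i)" "U (i+1) \<circ> (U i \<circ> U (i+1))"]
        U_braid i unfolding M_def U_def by simp
    also have "\<dots> = T (i + 1) (T i (T (i + 1) v))" using TTT[OF i1 i2] by simp
    finally show "T i (T (i + 1) (T i v)) = T (i + 1) (T i (T (i + 1) v))" .
  qed
  have P5: "\<forall>i. 1 \<le> i \<and> i \<le> n - 1 \<longrightarrow> (\<forall>m\<in>M. U i m \<noteq> m \<longrightarrow>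
        omega lam n (U i m) = omega lam n m \<circ> transpose i (i + 1)
      \<and> inversions n (omega lam n (U i m)) + 1 = inversions n (omega lam n m))"
  proof (intro allI impI ballI conjI)
    fix i m assume i: "1 \<le> i \<and> i \<le> n - 1" and m: "m \<in> M" and ne: "U i m \<noteq> m"
    then have i': "1 \<le> i" "i < n" using lt by auto
    have m': "m \<in> MC" using m by (simp add: M_def)
    have ne': "UU i m \<noteq> m" using ne by (simp add: U_def)
    show om: "omega lam n (U i m) = omega lam n m \<circ> transpose i (i + 1)"
      using U_omega[OF m' i' ne'] by (simp add: U_def)
    have d: "labels lam m ! i < labels lam m ! (i-1)" using U_desc[OF m' i' ne'] .
    have "labels lam m ! i \<in> set (labels lam m)" using lenM[OF m'] i' by simp
    then have pos: "labels lam m ! i \<ge> 1" using perm[OF m'] by auto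
    have "omega lam n m (i + 1) < omega lam n m i" using d pos i' by (simp add: omega_def)
    from inv_swap[of i n "omega lam n m", OF _ _ this] i' om
    show "inversions n (omega lam n (U i m)) + 1 = inversions n (omega lam n m)" by simp
  qed
  show ?thesis
    apply (intro conjI)
        apply (rule P1)
       apply (rule P2)
      apply (rule P3)
     apply (intro allI impI)
     apply (rule P4)
    apply (rule P5)
    done
qed

end
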